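(* Let $K$ be an arbitrary field and let $\tau=(q_{11},q_{12},q_{21},q_{22})$ and $\sigma=(p_{11},p_{12},p_{21},p_{22})$ be diagonal braidings on $K\langle x_1,x_2\rangle$. Then the braided algebras $A_\tau$ and $A_\sigma$ are isomorphic if and only if $\sigma=\tau$ or $\sigma=\tau^*$, where $\tau^*=(q_{22},q_{21},q_{12},q_{11})$.
   Context: $A=K\langle x_1,x_2\rangle$ is the free associative algebra with unit on $x_1,x_2$, with basis the set $X^*$ of words. For $q_{ij}\in K$, the diagonal braiding $\tau=(q_{11},q_{12},q_{21},q_{22})$ on $A$ is the linear map $A\otimes A\to A\otimes A$ given on words $u,v$ by $(u\otimes v)\tau=q_{11}^{s_1t_1}q_{12}^{s_1t_2}q_{21}^{s_2t_1}q_{22}^{s_2t_2}\,(v\otimes u)$, where $s_i$ (resp. $t_i$) is the number of occurrences of $x_i$ in $u$ (resp. $v$) (convention $0^0=1$); this is the unique extension to $A$, making $A$ a braided algebra, of the braiding $x_i\otimes x_j\mapsto q_{ij}x_j\otimes x_i$ of $V=Kx_1+Kx_2$. $A_\tau$ denotes $A$ equipped with $\tau$. An isomorphism of braided algebras $A_\tau\to A_\sigma$ is an algebra isomorphism $\varphi:A\to A$ such that $\tau(\varphi\otimes\varphi)=(\varphi\otimes\varphi)\sigma$, i.e. $(\varphi\otimes\varphi)((u\otimes v)\tau)=((\varphi\otimes\varphi)(u\otimes v))\sigma$ for all $u,v\in A$. *)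

theory Defs
  imports "HOL-Library.Poly_Mapping"
begin

datatype gen = X1 | X2

datatype word = Word "gen list"

fun letters :: "word \<Rightarrow> gen list" where "letters (Word w) = w"

instantiation word :: monoid_add
begin
definition zero_word :: word where "zero_word = Word []"
definition plus_word :: "word \<Rightarrow> word \<Rightarrow> word" where
  "plus_word u v = Word (letters u @ letters v)"
instance
proof
  fix a b c :: word
  show "a + b + c = a + (b + c)" by (cases a; cases b; cases c) (simp add: plus_word_def)
  show "0 + a = a" by (cases a) (simp add: plus_word_def zero_word_def)
  show "a + 0 = a" by (cases a) (simp add: plus_word_def zero_word_def)
qed
end

text \<open>The free associative unital algebra K<x1,x2>: finitely supported K-valued functions on words,
  with convolution product (basis = words, product = concatenation).\<close>
type_synonym 'k falg = "word \<Rightarrow>\<^sub>0 'k"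

text \<open>A \<otimes> A, with basis the pairs of words.\<close>
type_synonym 'k ftens = "(word \<times> word) \<Rightarrow>\<^sub>0 'k"

definition smult :: "'k::semiring_0 \<Rightarrow> ('a \<Rightarrow>\<^sub>0 'k) \<Rightarrow> ('a \<Rightarrow>\<^sub>0 'k)" where
  "smult c a = Poly_Mapping.map (\<lambda>x. c * x) a"

definition tens :: "'k::field falg \<Rightarrow> 'k falg \<Rightarrow> 'k ftens" where
  "tens a b = (\<Sum>u\<in>Poly_Mapping.keys a. \<Sum>v\<in>Poly_Mapping.keys b.
      Poly_Mapping.single (u, v) (Poly_Mapping.lookup a u * Poly_Mapping.lookup b v))"

definition occ :: "gen \<Rightarrow> word \<Rightarrow> nat" where
  "occ i u = length (filter (\<lambda>g. g = i) (letters u))"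

text \<open>A diagonal braiding is given by its matrix q (q i j = q_ij).
  Coefficient of (u \<otimes> v)\<tau> = coef * (v \<otimes> u); note x^0 = 1 in Isabelle, so 0^0 = 1.\<close>
definition bcoef :: "(gen \<Rightarrow> gen \<Rightarrow> 'k::field) \<Rightarrow> word \<Rightarrow> word \<Rightarrow> 'k" where
  "bcoef q u v = q X1 X1 ^ (occ X1 u * occ X1 v) * q X1 X2 ^ (occ X1 u * occ X2 v)
               * q X2 X1 ^ (occ X2 u * occ X1 v) * q X2 X2 ^ (occ X2 u * occ X2 v)"

definition braid :: "(gen \<Rightarrow> gen \<Rightarrow> 'k::field) \<Rightarrow> 'k ftens \<Rightarrow> 'k ftens" where
  "braid q t = (\<Sum>uv\<in>Poly_Mapping.keys t.
      Poly_Mapping.single (snd uv, fst uv) (Poly_Mapping.lookup t uv * bcoef q (fst uv) (snd uv)))"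

definition tensmap :: "('k::field falg \<Rightarrow> 'k falg) \<Rightarrow> 'k ftens \<Rightarrow> 'k ftens" where
  "tensmap \<phi> t = (\<Sum>uv\<in>Poly_Mapping.keys t.
      smult (Poly_Mapping.lookup t uv) (tens (\<phi> (Poly_Mapping.single (fst uv) 1)) (\<phi> (Poly_Mapping.single (snd uv) 1))))"

definition alg_iso :: "('k::field falg \<Rightarrow> 'k falg) \<Rightarrow> bool" where
  "alg_iso \<phi> \<longleftrightarrow> bij \<phi>
     \<and> (\<forall>a b. \<phi> (a + b) = \<phi> a + \<phi> b)
     \<and> (\<forall>c a. \<phi> (smult c a) = smult c (\<phi> a))
     \<and> (\<forall>a b. \<phi> (a * b) = \<phi> a * \<phi> b)
     \<and> \<phi> 1 = 1"

text \<open>Isomorphism of braided algebras A_tau \<rightarrow> A_sigma: tau(phi\<otimes>phi) = (phi\<otimes>phi)sigma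
  (maps acting on the right).\<close>
definition braided_iso :: "(gen \<Rightarrow> gen \<Rightarrow> 'k::field) \<Rightarrow> (gen \<Rightarrow> gen \<Rightarrow> 'k) \<Rightarrow> ('k falg \<Rightarrow> 'k falg) \<Rightarrow> bool" where
  "braided_iso q p \<phi> \<longleftrightarrow> alg_iso \<phi>
     \<and> (\<forall>a b. tensmap \<phi> (braid q (tens a b)) = braid p (tensmap \<phi> (tens a b)))"

definition braided_isomorphic :: "(gen \<Rightarrow> gen \<Rightarrow> 'k::field) \<Rightarrow> (gen \<Rightarrow> gen \<Rightarrow> 'k) \<Rightarrow> bool" where
  "braided_isomorphic q p \<longleftrightarrow> (\<exists>\<phi>. braided_iso q p \<phi>)"

fun swap_gen :: "gen \<Rightarrow> gen" where "swap_gen X1 = X2" | "swap_gen X2 = X1"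

definition dual_braiding :: "(gen \<Rightarrow> gen \<Rightarrow> 'k) \<Rightarrow> (gen \<Rightarrow> gen \<Rightarrow> 'k)" where
  "dual_braiding q = (\<lambda>i j. q (swap_gen i) (swap_gen j))"

end

theory Submission
  imports Defs
begin


lemma lookup_smult[simp]: "Poly_Mapping.lookup (smult c a) k = c * Poly_Mapping.lookup a k"
  by (simp add: smult_def map.rep_eq when_def)

lemma pm_expand: "(f::'a \<Rightarrow>\<^sub>0 'b::comm_monoid_add) = (\<Sum>w\<in>Poly_Mapping.keys f. Poly_Mapping.single w (Poly_Mapping.lookup f w))"
proof (rule poly_mapping_eqI)
  fix k
  show "Poly_Mapping.lookup f k = Poly_Mapping.lookup (\<Sum>w\<in>Poly_Mapping.keys f. Poly_Mapping.single w (Poly_Mapping.lookup f w)) k"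
    by (simp add: lookup_sum lookup_single when_def in_keys_iff)
qed

lemma lookup_tens[simp]: "Poly_Mapping.lookup (tens a b) (u, v) = Poly_Mapping.lookup a u * Poly_Mapping.lookup b v"
proof -
  have "Poly_Mapping.lookup (tens a b) (u, v) =
     (\<Sum>u'\<in>Poly_Mapping.keys a. \<Sum>v'\<in>Poly_Mapping.keys b. (Poly_Mapping.lookup a u' * Poly_Mapping.lookup b v' when u' = u \<and> v' = v))"
    unfolding tens_def lookup_sum lookup_single by (intro sum.cong refl) (auto simp: when_def)
  also have "\<dots> = (\<Sum>u'\<in>Poly_Mapping.keys a. (Poly_Mapping.lookup a u' * Poly_Mapping.lookup b v when u' = u))"
    by (intro sum.cong refl) (auto simp: when_def in_keys_iff)
  also have "\<dots> = Poly_Mapping.lookup a u * Poly_Mapping.lookup b v"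
    by (auto simp: when_def in_keys_iff)
  finally show ?thesis .
qed

lemma lookup_braid[simp]: "Poly_Mapping.lookup (braid q t) (x, y) = Poly_Mapping.lookup t (y, x) * bcoef q y x"
proof -
  have "Poly_Mapping.lookup (braid q t) (x, y) =
     (\<Sum>uv\<in>Poly_Mapping.keys t. (Poly_Mapping.lookup t uv * bcoef q (fst uv) (snd uv) when uv = (y, x)))"
    unfolding braid_def lookup_sum lookup_single by (intro sum.cong refl) (auto simp: when_def)
  also have "\<dots> = Poly_Mapping.lookup t (y, x) * bcoef q y x"
    by (auto simp: when_def in_keys_iff)
  finally show ?thesis .
qed

lemma lookup_tensmap: "Poly_Mapping.lookup (tensmap \<phi> t) (x, y) =
   (\<Sum>uv\<in>Poly_Mapping.keys t. Poly_Mapping.lookup t uv * (Poly_Mapping.lookup (\<phi> (Poly_Mapping.single (fst uv) 1)) x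
     * Poly_Mapping.lookup (\<phi> (Poly_Mapping.single (snd uv) 1)) y))"
  unfolding tensmap_def lookup_sum by simp

lemma Sum_any_supp: "finite A \<Longrightarrow> (\<And>a. a \<notin> A \<Longrightarrow> g a = 0) \<Longrightarrow> Sum_any g = sum g A"
  by (rule Sum_any.expand_superset) auto

lemma word_plus_Nil: "(l::word) + r = 0 \<longleftrightarrow> l = 0 \<and> r = 0"
  by (cases l; cases r) (auto simp: plus_word_def zero_word_def)

lemma word_plus_single: "(l::word) + r = Word [x] \<longleftrightarrow> (l = 0 \<and> r = Word [x]) \<or> (l = Word [x] \<and> r = 0)"
  by (cases l; cases r) (auto simp: plus_word_def zero_word_def append_eq_Cons_conv)

lemma word_plus_Nil': "(0::word) = l + r \<longleftrightarrow> l = 0 \<and> r = 0"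
  using word_plus_Nil[of l r] by auto

lemma lookup_mult_zero: "Poly_Mapping.lookup (h * k) (0::word) = Poly_Mapping.lookup h 0 * Poly_Mapping.lookup (k::'k::field falg) 0"
proof -
  have inner: "(\<Sum>q. Poly_Mapping.lookup k q when (0::word) = l + q) = (if l = 0 then Poly_Mapping.lookup k 0 else 0)" for l
  proof (cases "l = 0")
    case True
    have h: "(\<lambda>q. Poly_Mapping.lookup k q when (0::word) = l + q) = (\<lambda>q. Poly_Mapping.lookup k q when q = 0)"
      by (rule ext) (auto simp: True when_def)
    show ?thesis unfolding h using True by simp
  next
    case False
    have h: "(\<lambda>q. Poly_Mapping.lookup k q when (0::word) = l + q) = (\<lambda>q. 0)"
      by (rule ext) (simp add: when_def word_plus_Nil' False)
    show ?thesis unfolding h using False by simp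
  qed
  have "(\<Sum>l. Poly_Mapping.lookup h l * (if l = 0 then Poly_Mapping.lookup k 0 else 0)) =
      (\<Sum>l\<in>{0}. Poly_Mapping.lookup h l * (if l = 0 then Poly_Mapping.lookup k 0 else 0))"
    by (rule Sum_any_supp) auto
  then show ?thesis unfolding lookup_mult inner by simp
qed

lemma lookup_mult_single: "Poly_Mapping.lookup (h * k) (Word [x]) =
   Poly_Mapping.lookup h 0 * Poly_Mapping.lookup (k::'k::field falg) (Word [x]) + Poly_Mapping.lookup h (Word [x]) * Poly_Mapping.lookup k 0"
proof -
  have ne: "(0::word) \<noteq> Word [x]" by (simp add: zero_word_def)
  have cond: "(Word [x] = l + q) = ((l = 0 \<and> q = Word [x]) \<or> (l = Word [x] \<and> q = 0))" for l q
    by (metis word_plus_single)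
  have inner: "(\<Sum>q. Poly_Mapping.lookup k q when Word [x] = l + q) =
     (if l = 0 then Poly_Mapping.lookup k (Word [x]) else if l = Word [x] then Poly_Mapping.lookup k 0 else 0)" for l
  proof -
    consider "l = 0" | "l = Word [x]" | "l \<noteq> 0" "l \<noteq> Word [x]" by blast
    then show ?thesis
    proof cases
      case 1
      have h: "(\<lambda>q. Poly_Mapping.lookup k q when Word [x] = l + q) = (\<lambda>q. Poly_Mapping.lookup k q when q = Word [x])"
        by (rule ext) (simp only: cond 1 ne simp_thms)
      show ?thesis unfolding h using 1 by simp
    next
      case 2
      have h: "(\<lambda>q. Poly_Mapping.lookup k q when Word [x] = l + q) = (\<lambda>q. Poly_Mapping.lookup k q when q = 0)"
        by (rule ext) (simp only: cond 2 ne[symmetric] simp_thms)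
      show ?thesis unfolding h using 2 ne by simp
    next
      case 3
      have h: "(\<lambda>q. Poly_Mapping.lookup k q when Word [x] = l + q) = (\<lambda>q. 0)"
        by (rule ext) (simp only: cond 3 simp_thms when_simps)
      show ?thesis unfolding h using 3 by simp
    qed
  qed
  have "(\<Sum>l. Poly_Mapping.lookup h l * (if l = 0 then Poly_Mapping.lookup k (Word [x]) else if l = Word [x] then Poly_Mapping.lookup k 0 else 0)) =
      (\<Sum>l\<in>{0, Word [x]}. Poly_Mapping.lookup h l * (if l = 0 then Poly_Mapping.lookup k (Word [x]) else if l = Word [x] then Poly_Mapping.lookup k 0 else 0))"
    by (rule Sum_any_supp) auto
  then show ?thesis unfolding lookup_mult inner using ne by simp
qed

lemma lookup_map_key': "inj s \<Longrightarrow> Poly_Mapping.lookup (Poly_Mapping.map_key s f) x = Poly_Mapping.lookup f (s x)"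
  by (simp add: map_key.rep_eq)

lemma relabel_iso:
  fixes s :: "word \<Rightarrow> word"
  assumes inv: "\<And>u. s (s u) = u" and hom: "\<And>u v. s (u + v) = s u + s v" and z: "s 0 = 0"
  shows "alg_iso (Poly_Mapping.map_key s :: 'k::field falg \<Rightarrow> 'k falg)"
proof -
  have inj: "inj s" by (rule injI) (metis inv)
  have bs: "bij s" by (rule o_bij[of s]) (auto simp: inv fun_eq_iff)
  note lk = lookup_map_key'[OF inj]
  let ?f = "Poly_Mapping.map_key s :: 'k falg \<Rightarrow> 'k falg"
  have ff: "?f (?f a) = a" for a by (rule poly_mapping_eqI) (simp add: lk inv)
  have "bij ?f" by (rule o_bij[of ?f]) (auto simp: ff fun_eq_iff)
  moreover have "\<forall>a b. ?f (a + b) = ?f a + ?f b" by (auto intro!: poly_mapping_eqI simp: lk lookup_add)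
  moreover have "\<forall>c a. ?f (smult c a) = smult c (?f a)" by (auto intro!: poly_mapping_eqI simp: lk)
  moreover have "\<forall>a b. ?f (a * b) = ?f a * ?f b"
  proof (intro allI, rule poly_mapping_eqI)
    fix a b :: "'k falg" and w
    have e: "(s w = s l + s q) = (w = l + q)" for l q
    proof
      assume "s w = s l + s q"
      then have "s (s w) = s (s l + s q)" by simp
      then show "w = l + q" by (simp only: hom inv)
    qed (simp add: hom)
    have inner: "(\<Sum>q. Poly_Mapping.lookup b q when s w = s l + q) = (\<Sum>q. Poly_Mapping.lookup b (s q) when w = l + q)" for l
      apply (rule Sum_any.reindex_cong[OF bs])
      apply (rule ext)
      apply (simp only: comp_def e)
      done
    show "Poly_Mapping.lookup (?f (a * b)) w = Poly_Mapping.lookup (?f a * ?f b) w"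
      unfolding lk lookup_mult
      apply (rule Sum_any.reindex_cong[OF bs])
      apply (rule ext)
      apply (simp only: comp_def inner)
      done
  qed
  moreover have "?f 1 = 1"
    by (rule poly_mapping_eqI) (simp add: lk lookup_one when_def, metis inv z)
  ultimately show ?thesis unfolding alg_iso_def by blast
qed

lemma tensmap_relabel:
  fixes s :: "word \<Rightarrow> word"
  assumes inj: "inj s"
  shows "Poly_Mapping.lookup (tensmap (Poly_Mapping.map_key s) (t::'k::field ftens)) (x, y) = Poly_Mapping.lookup t (s x, s y)"
proof -
  note lk = lookup_map_key'[OF inj]
  have "Poly_Mapping.lookup (tensmap (Poly_Mapping.map_key s) t) (x, y) =
     (\<Sum>uv\<in>Poly_Mapping.keys t. (Poly_Mapping.lookup t uv when uv = (s x, s y)))"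
    unfolding lookup_tensmap by (intro sum.cong refl) (auto simp: lk lookup_single when_def)
  also have "\<dots> = Poly_Mapping.lookup t (s x, s y)" by (auto simp: when_def in_keys_iff)
  finally show ?thesis .
qed

lemma relabel_braided:
  fixes s :: "word \<Rightarrow> word" and q p :: "gen \<Rightarrow> gen \<Rightarrow> 'k::field"
  assumes inv: "\<And>u. s (s u) = u" and hom: "\<And>u v. s (u + v) = s u + s v" and z: "s 0 = 0"
    and bc: "\<And>u v. bcoef p u v = bcoef q (s u) (s v)"
  shows "braided_isomorphic q p"
proof -
  have inj: "inj s" by (rule injI) (metis inv)
  have "braided_iso q p (Poly_Mapping.map_key s)"
    unfolding braided_iso_def
  proof (intro conjI allI)
    show "alg_iso (Poly_Mapping.map_key s :: 'k falg \<Rightarrow> _)" by (rule relabel_iso[OF inv hom z])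
    fix a b :: "'k falg"
    show "tensmap (Poly_Mapping.map_key s) (braid q (tens a b)) = braid p (tensmap (Poly_Mapping.map_key s) (tens a b))"
    proof (rule poly_mapping_eqI)
      fix k :: "word \<times> word"
      obtain x y where k: "k = (x, y)" by (cases k)
      show "Poly_Mapping.lookup (tensmap (Poly_Mapping.map_key s) (braid q (tens a b))) k =
            Poly_Mapping.lookup (braid p (tensmap (Poly_Mapping.map_key s) (tens a b))) k"
        unfolding k tensmap_relabel[OF inj] lookup_braid by (simp add: bc)
    qed
  qed
  then show ?thesis unfolding braided_isomorphic_def by blast
qed

fun swapw :: "word \<Rightarrow> word" where "swapw (Word l) = Word (map swap_gen l)"

lemma swap_gen_inv[simp]: "swap_gen (swap_gen g) = g" by (cases g) auto

lemma swap_eq: "(swap_gen a = i) = (a = swap_gen i)" by (cases a; cases i) auto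

lemma occ_swapw: "occ i (swapw u) = occ (swap_gen i) u"
proof (cases u)
  case (Word l)
  have "length (filter (\<lambda>g. g = i) (map swap_gen l)) = length (filter (\<lambda>g. g = swap_gen i) l)"
    by (induction l) (auto simp: swap_eq)
  then show ?thesis by (simp add: Word occ_def)
qed

lemma easy:
  fixes q p :: "gen \<Rightarrow> gen \<Rightarrow> 'k::field"
  assumes "p = q \<or> p = dual_braiding q"
  shows "braided_isomorphic q p"
  using assms
proof
  assume "p = q"
  then show ?thesis by (intro relabel_braided[where s = id]) auto
next
  assume p: "p = dual_braiding q"
  show ?thesis
  proof (rule relabel_braided[where s = swapw])
    show "swapw (swapw u) = u" for u by (cases u) (simp add: comp_def)
    show "swapw (u + v) = swapw u + swapw v" for u v by (cases u; cases v) (simp add: plus_word_def)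
    show "swapw 0 = 0" by (simp add: zero_word_def)
    show "bcoef p u v = bcoef q (swapw u) (swapw v)" for u v
      unfolding p bcoef_def dual_braiding_def occ_swapw swap_gen.simps
      by (simp only: mult.assoc mult.commute mult.left_commute)
  qed
qed



lemma bcoef_gens[simp]: "bcoef q (Word [i]) (Word [j]) = q i j"
  by (cases i; cases j) (simp_all add: bcoef_def occ_def)

lemma lookup_tensmap_single: "Poly_Mapping.lookup (tensmap \<phi> (Poly_Mapping.single (x, y) c)) (x', y') =
   c * (Poly_Mapping.lookup (\<phi> (Poly_Mapping.single x 1)) x' * Poly_Mapping.lookup (\<phi> (Poly_Mapping.single y 1)) y')"
  by (cases "c = 0") (simp_all add: lookup_tensmap)

lemma tens_single: "tens (Poly_Mapping.single u (1::'k::field)) (Poly_Mapping.single v 1) = Poly_Mapping.single (u, v) 1"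
proof (rule poly_mapping_eqI)
  fix k :: "word \<times> word"
  obtain x y where k: "k = (x, y)" by (cases k)
  show "Poly_Mapping.lookup (tens (Poly_Mapping.single u (1::'k)) (Poly_Mapping.single v 1)) k = Poly_Mapping.lookup (Poly_Mapping.single (u, v) 1) k"
    unfolding k lookup_tens by (auto simp: lookup_single when_def)
qed

lemma braid_single: "braid q (Poly_Mapping.single (u, v) (1::'k::field)) = Poly_Mapping.single (v, u) (bcoef q u v)"
proof (rule poly_mapping_eqI)
  fix k :: "word \<times> word"
  obtain x y where k: "k = (x, y)" by (cases k)
  show "Poly_Mapping.lookup (braid q (Poly_Mapping.single (u, v) 1)) k = Poly_Mapping.lookup (Poly_Mapping.single (v, u) (bcoef q u v)) k"
    unfolding k lookup_braid by (auto simp: lookup_single when_def)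
qed

lemma stepA:
  fixes q p :: "gen \<Rightarrow> gen \<Rightarrow> 'k::field"
  assumes bi: "braided_iso q p \<phi>"
    and nu: "Poly_Mapping.lookup (\<phi> (Poly_Mapping.single (Word [i]) 1)) u \<noteq> 0"
    and nv: "Poly_Mapping.lookup (\<phi> (Poly_Mapping.single (Word [j]) 1)) v \<noteq> 0"
  shows "bcoef p u v = q i j"
proof -
  let ?ei = "Poly_Mapping.single (Word [i]) (1::'k)" and ?ej = "Poly_Mapping.single (Word [j]) (1::'k)"
  have "tensmap \<phi> (braid q (tens ?ei ?ej)) = braid p (tensmap \<phi> (tens ?ei ?ej))"
    using bi unfolding braided_iso_def by blast
  then have "Poly_Mapping.lookup (tensmap \<phi> (braid q (tens ?ei ?ej))) (v, u) = Poly_Mapping.lookup (braid p (tensmap \<phi> (tens ?ei ?ej))) (v, u)"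
    by simp
  then have "q i j * (Poly_Mapping.lookup (\<phi> ?ej) v * Poly_Mapping.lookup (\<phi> ?ei) u) =
      1 * (Poly_Mapping.lookup (\<phi> ?ei) u * Poly_Mapping.lookup (\<phi> ?ej) v) * bcoef p u v"
    unfolding tens_single braid_single lookup_braid lookup_tensmap_single bcoef_gens .
  with nu nv show ?thesis by (simp add: mult_ac)
qed



definition gg :: "('k::field falg \<Rightarrow> 'k falg) \<Rightarrow> gen \<Rightarrow> 'k falg" where
  "gg \<phi> x = \<phi> (Poly_Mapping.single (Word [x]) 1)"

definition aa :: "('k::field falg \<Rightarrow> 'k falg) \<Rightarrow> gen \<Rightarrow> gen \<Rightarrow> 'k" where
  "aa \<phi> x y = Poly_Mapping.lookup (gg \<phi> x) (Word [y])"

definition PP :: "('k::field falg \<Rightarrow> 'k falg) \<Rightarrow> 'k falg \<Rightarrow> bool" where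
  "PP \<phi> h \<longleftrightarrow> (\<exists>b1 b2. \<forall>y. Poly_Mapping.lookup h (Word [y]) = b1 * aa \<phi> X1 y + b2 * aa \<phi> X2 y)"

lemma PP_add: "PP \<phi> h \<Longrightarrow> PP \<phi> k \<Longrightarrow> PP \<phi> (h + k)"
proof -
  assume "PP \<phi> h" "PP \<phi> k"
  then obtain b1 b2 c1 c2 where
    b: "\<forall>y. Poly_Mapping.lookup h (Word [y]) = b1 * aa \<phi> X1 y + b2 * aa \<phi> X2 y" and
    c: "\<forall>y. Poly_Mapping.lookup k (Word [y]) = c1 * aa \<phi> X1 y + c2 * aa \<phi> X2 y"
    unfolding PP_def by blast
  show ?thesis unfolding PP_def
  proof (intro exI allI)
    fix y
    show "Poly_Mapping.lookup (h + k) (Word [y]) = (b1 + c1) * aa \<phi> X1 y + (b2 + c2) * aa \<phi> X2 y"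
      unfolding lookup_add b[rule_format] c[rule_format] by (simp add: algebra_simps)
  qed
qed

lemma PP_zero: "PP \<phi> 0"
  unfolding PP_def by (rule exI[of _ 0], rule exI[of _ 0]) simp

lemma PP_smult: "PP \<phi> h \<Longrightarrow> PP \<phi> (smult c h)"
proof -
  assume "PP \<phi> h"
  then obtain b1 b2 where
    b: "\<forall>y. Poly_Mapping.lookup h (Word [y]) = b1 * aa \<phi> X1 y + b2 * aa \<phi> X2 y"
    unfolding PP_def by blast
  show ?thesis unfolding PP_def
  proof (intro exI allI)
    fix y
    show "Poly_Mapping.lookup (smult c h) (Word [y]) = (c * b1) * aa \<phi> X1 y + (c * b2) * aa \<phi> X2 y"
      unfolding lookup_smult b[rule_format] by (simp add: algebra_simps)
  qed
qed

lemma PP_sum: "finite A \<Longrightarrow> (\<And>x. x \<in> A \<Longrightarrow> PP \<phi> (f x)) \<Longrightarrow> PP \<phi> (\<Sum>x\<in>A. f x)"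
  by (induction A rule: finite_induct) (auto intro: PP_add PP_zero)

lemma PP_mult: "PP \<phi> h \<Longrightarrow> PP \<phi> k \<Longrightarrow> PP \<phi> (h * k)"
proof -
  assume "PP \<phi> h" "PP \<phi> k"
  then obtain b1 b2 c1 c2 where
    b: "\<forall>y. Poly_Mapping.lookup h (Word [y]) = b1 * aa \<phi> X1 y + b2 * aa \<phi> X2 y" and
    c: "\<forall>y. Poly_Mapping.lookup k (Word [y]) = c1 * aa \<phi> X1 y + c2 * aa \<phi> X2 y"
    unfolding PP_def by blast
  let ?h0 = "Poly_Mapping.lookup h 0" and ?k0 = "Poly_Mapping.lookup k 0"
  show ?thesis unfolding PP_def
  proof (intro exI allI)
    fix y
    show "Poly_Mapping.lookup (h * k) (Word [y]) = (?h0 * c1 + b1 * ?k0) * aa \<phi> X1 y + (?h0 * c2 + b2 * ?k0) * aa \<phi> X2 y"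
      unfolding lookup_mult_single b[rule_format] c[rule_format] by (simp add: algebra_simps)
  qed
qed

lemma PP_one: "PP \<phi> 1"
  unfolding PP_def by (rule exI[of _ 0], rule exI[of _ 0]) (simp add: lookup_one when_def zero_word_def)

lemma PP_gen: "PP \<phi> (gg \<phi> x)"
  unfolding PP_def aa_def by (cases x) (rule exI[of _ 1], rule exI[of _ 0], simp, rule exI[of _ 0], rule exI[of _ 1], simp)

lemma alg_zero: "alg_iso \<phi> \<Longrightarrow> \<phi> 0 = 0"
  unfolding alg_iso_def by (metis add_cancel_right_right add_0)

lemma alg_sum: assumes "alg_iso \<phi>" "finite A" shows "\<phi> (\<Sum>x\<in>A. f x) = (\<Sum>x\<in>A. \<phi> (f x))"
  using assms(2) by (induction A rule: finite_induct) (use assms in \<open>auto simp: alg_zero, simp add: alg_iso_def\<close>)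

lemma single_smult: "Poly_Mapping.single w c = smult c (Poly_Mapping.single w (1::'k::field))"
  by (rule poly_mapping_eqI) (simp add: lookup_single when_def)

lemma PP_words: "alg_iso \<phi> \<Longrightarrow> PP \<phi> (\<phi> (Poly_Mapping.single (Word l) 1))"
proof (induction l)
  case Nil
  have "Poly_Mapping.single (Word []) (1::'a) = 1" by (simp add: zero_word_def[symmetric])
  then show ?case using Nil PP_one unfolding alg_iso_def by metis
next
  case (Cons x l)
  have "Poly_Mapping.single (Word (x # l)) (1::'a) = Poly_Mapping.single (Word [x]) 1 * Poly_Mapping.single (Word l) 1"
    by (simp add: mult_single plus_word_def)
  then have "\<phi> (Poly_Mapping.single (Word (x # l)) 1) = gg \<phi> x * \<phi> (Poly_Mapping.single (Word l) 1)"
    using Cons.prems unfolding alg_iso_def gg_def by metis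
  then show ?case using PP_mult[OF PP_gen Cons.IH[OF Cons.prems]] by simp
qed

lemma PP_all: assumes "alg_iso \<phi>" shows "PP \<phi> (\<phi> f)"
proof -
  have "\<phi> f = \<phi> (\<Sum>w\<in>Poly_Mapping.keys f. smult (Poly_Mapping.lookup f w) (Poly_Mapping.single w 1))"
    by (subst pm_expand) (simp add: single_smult[symmetric])
  also have "\<dots> = (\<Sum>w\<in>Poly_Mapping.keys f. smult (Poly_Mapping.lookup f w) (\<phi> (Poly_Mapping.single w 1)))"
    using assms by (simp add: alg_sum, simp add: alg_iso_def)
  finally show ?thesis
    apply simp
    apply (rule PP_sum, simp)
    apply (rule PP_smult)
    by (metis PP_words assms word.exhaust)
qed

lemma det_nonzero:
  assumes "alg_iso \<phi>"
  shows "aa \<phi> X1 X1 * aa \<phi> X2 X2 \<noteq> aa \<phi> X1 X2 * aa \<phi> X2 X1"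
proof -
  have sj: "surj \<phi>" using assms unfolding alg_iso_def bij_def by blast
  obtain f1 where f1: "\<phi> f1 = Poly_Mapping.single (Word [X1]) 1" using sj by (metis surjD)
  obtain f2 where f2: "\<phi> f2 = Poly_Mapping.single (Word [X2]) 1" using sj by (metis surjD)
  from PP_all[OF assms, of f1] obtain b1 b2 where
    b: "\<forall>y. Poly_Mapping.lookup (Poly_Mapping.single (Word [X1]) (1::'a)) (Word [y]) = b1 * aa \<phi> X1 y + b2 * aa \<phi> X2 y"
    unfolding PP_def f1 by blast
  from PP_all[OF assms, of f2] obtain c1 c2 where
    c: "\<forall>y. Poly_Mapping.lookup (Poly_Mapping.single (Word [X2]) (1::'a)) (Word [y]) = c1 * aa \<phi> X1 y + c2 * aa \<phi> X2 y"
    unfolding PP_def f2 by blast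
  have e1: "b1 * aa \<phi> X1 X1 + b2 * aa \<phi> X2 X1 = 1" and e2: "b1 * aa \<phi> X1 X2 + b2 * aa \<phi> X2 X2 = 0"
    using b[rule_format, of X1] b[rule_format, of X2] by (simp_all add: lookup_single)
  have e3: "c1 * aa \<phi> X1 X1 + c2 * aa \<phi> X2 X1 = 0" and e4: "c1 * aa \<phi> X1 X2 + c2 * aa \<phi> X2 X2 = 1"
    using c[rule_format, of X1] c[rule_format, of X2] by (simp_all add: lookup_single)
  show ?thesis
  proof
    assume d: "aa \<phi> X1 X1 * aa \<phi> X2 X2 = aa \<phi> X1 X2 * aa \<phi> X2 X1"
    have "(b1 * c2 - b2 * c1) * (aa \<phi> X1 X1 * aa \<phi> X2 X2 - aa \<phi> X1 X2 * aa \<phi> X2 X1) =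
       (b1 * aa \<phi> X1 X1 + b2 * aa \<phi> X2 X1) * (c1 * aa \<phi> X1 X2 + c2 * aa \<phi> X2 X2)
       - (b1 * aa \<phi> X1 X2 + b2 * aa \<phi> X2 X2) * (c1 * aa \<phi> X1 X1 + c2 * aa \<phi> X2 X1)"
      by (simp add: algebra_simps)
    then show False using d e1 e2 e3 e4 by simp
  qed
qed

lemma hard:
  fixes q p :: "gen \<Rightarrow> gen \<Rightarrow> 'k::field"
  assumes "braided_isomorphic q p"
  shows "p = q \<or> p = dual_braiding q"
proof -
  obtain \<phi> where bi: "braided_iso q p \<phi>" using assms unfolding braided_isomorphic_def by blast
  then have ai: "alg_iso \<phi>" unfolding braided_iso_def by blast
  note A = stepA[OF bi]
  from det_nonzero[OF ai]
  have "(aa \<phi> X1 X1 \<noteq> 0 \<and> aa \<phi> X2 X2 \<noteq> 0) \<or> (aa \<phi> X1 X2 \<noteq> 0 \<and> aa \<phi> X2 X1 \<noteq> 0)" by auto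
  then show ?thesis
  proof
    assume h: "aa \<phi> X1 X1 \<noteq> 0 \<and> aa \<phi> X2 X2 \<noteq> 0"
    have nz: "Poly_Mapping.lookup (\<phi> (Poly_Mapping.single (Word [i]) 1)) (Word [i]) \<noteq> 0" for i
      using h by (cases i) (auto simp: aa_def gg_def)
    have "p i j = q i j" for i j using A[OF nz nz] by simp
    then show ?thesis by (auto simp: fun_eq_iff)
  next
    assume h: "aa \<phi> X1 X2 \<noteq> 0 \<and> aa \<phi> X2 X1 \<noteq> 0"
    have nz: "Poly_Mapping.lookup (\<phi> (Poly_Mapping.single (Word [i]) 1)) (Word [swap_gen i]) \<noteq> 0" for i
      using h by (cases i) (auto simp: aa_def gg_def)
    have "p (swap_gen i) (swap_gen j) = q i j" for i j using A[OF nz nz] by simp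
    then have "p i j = dual_braiding q i j" for i j
      unfolding dual_braiding_def by (metis swap_gen_inv)
    then show ?thesis by (auto simp: fun_eq_iff)
  qed
qed

theorem proposition1:
  fixes q p :: "gen \<Rightarrow> gen \<Rightarrow> 'k::field"
  shows "braided_isomorphic q p \<longleftrightarrow> (p = q \<or> p = dual_braiding q)"
  using hard easy by blast


end
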